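(* Let $\mathbb D=\{z\in\mathbb C:|z|<1\}$ and let $\mathcal P$ be the set of holomorphic functions $p$ on $\mathbb D$ with $\operatorname{Re} p(z)>0$ for all $z\in\mathbb D$ (no normalization $p(0)=1$ is imposed). For $p\in\mathcal P$ and $0<r<1$ set \[ I_p(r):=\int_0^{2\pi}\left|\frac{z p'(z)}{p(z)}\right|^2\,d\theta,\qquad z=re^{i\theta}. \] Then there exists a function $p_*\in\mathcal P$ such that for every real $\beta<2$, $I_{p_*}(r)\neq O\bigl((1-r)^{-\beta}\bigr)$ as $r\to1^-$.
   Context: $A(r)\ne O(B(r))$ as $r\to1^-$ means there is no constant $C$ with $A(r)\le C B(r)$ for all $r$ sufficiently close to $1$. *)

theory Defs
  imports "HOL-Complex_Analysis.Complex_Analysis"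
begin

definition carath_P :: "(complex \<Rightarrow> complex) set" where
  "carath_P = {p. p holomorphic_on ball 0 1 \<and> (\<forall>z\<in>ball 0 1. Re (p z) > 0)}"

definition I_int :: "(complex \<Rightarrow> complex) \<Rightarrow> real \<Rightarrow> real" where
  "I_int p r = integral {0..2*pi}
     (\<lambda>\<theta>. let z = complex_of_real r * exp (\<i> * complex_of_real \<theta>)
           in (cmod (z * deriv p z / p z))^2)"

end

theory Submission
  imports Defs
begin


definition aa :: "nat \<Rightarrow> real" where "aa k = (1/2)^Suc k"
definition nn :: "nat \<Rightarrow> nat" where "nn k = 2^(4*k^2)"
definition ft :: "nat \<Rightarrow> complex \<Rightarrow> complex" where "ft k w = of_real (aa k) * w^(nn k)"
definition fd :: "nat \<Rightarrow> complex \<Rightarrow> complex" where "fd k w = of_real (aa k * real (nn k)) * w^(nn k - 1)"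
definition gf :: "complex \<Rightarrow> complex" where "gf z = (\<Sum>k. ft k z)"
definition gd :: "complex \<Rightarrow> complex" where "gd z = (\<Sum>k. fd k z)"

lemma aa_pos: "aa k > 0" by (simp add: aa_def)
lemma aa_sums: "aa sums 1" unfolding aa_def by (rule power_half_series)
lemma nn_pos: "nn k \<ge> 1" by (simp add: nn_def)

lemma pow_bound:
  fixes r :: real assumes "0 \<le> r" "r < 1"
  shows "real m * r^(m-1) \<le> 1/(1-r)"
proof -
  have "real m * r^(m-1) = (\<Sum>j<m. r^(m-1))" by simp
  also have "\<dots> \<le> (\<Sum>j<m. r^j)"
    by (intro sum_mono power_decreasing) (use assms in auto)
  also have "\<dots> = (1 - r^m)/(1-r)" using assms by (simp add: sum_gp_strict)
  also have "\<dots> \<le> 1/(1-r)" using assms by (intro divide_right_mono) auto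
  finally show ?thesis .
qed

lemma gf_deriv:
  assumes "norm z < 1"
  shows "summable (\<lambda>k. ft k z)" "(gf has_field_derivative gd z) (at z)"
proof -
  define \<rho> where "\<rho> = (1 + norm z)/2"
  have rho: "0 \<le> \<rho>" "\<rho> < 1" "norm z < \<rho>" using assms by (auto simp: \<rho>_def)
  have d: "(ft k has_field_derivative fd k w) (at w within cball 0 \<rho>)" for k w
    unfolding ft_def fd_def
    by (auto intro!: derivative_eq_intros simp: mult_ac)
  have unif: "uniformly_convergent_on (cball 0 \<rho>) (\<lambda>n x. \<Sum>i<n. fd i x)"
  proof (rule Weierstrass_m_test')
    show "norm (fd k w) \<le> aa k / (1-\<rho>)" if "w \<in> cball 0 \<rho>" for k w
    proof -
      have "norm (fd k w) = aa k * (real (nn k) * norm w ^ (nn k - 1))"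
        using aa_pos[of k] by (simp add: fd_def norm_mult norm_power)
      also have "\<dots> \<le> aa k * (real (nn k) * \<rho> ^ (nn k - 1))"
        using that aa_pos[of k] by (intro mult_left_mono power_mono) auto
      also have "\<dots> \<le> aa k * (1/(1-\<rho>))"
        using pow_bound[OF rho(1,2)] aa_pos[of k] by (intro mult_left_mono) auto
      finally show ?thesis by simp
    qed
    show "summable (\<lambda>k. aa k / (1-\<rho>))"
      using aa_sums by (intro summable_divide) (auto simp: sums_iff)
  qed
  have s0: "summable (\<lambda>k. ft k 0)"
  proof -
    have "(\<lambda>k. ft k 0) = (\<lambda>_. 0)" using nn_pos by (auto simp: ft_def fun_eq_iff) (metis nn_pos not_one_le_zero)
    thus ?thesis by simp
  qed
  have int: "z \<in> interior (cball 0 \<rho>)" using rho by auto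
  note R = has_field_derivative_series'[OF convex_cball d unif _ s0 int]
  show "summable (\<lambda>k. ft k z)" using R(1) rho by auto
  have "((\<lambda>x. \<Sum>n. ft n x) has_field_derivative (\<Sum>n. fd n z)) (at z)" using R(2) rho by auto
  moreover have "(\<lambda>x. \<Sum>n. ft n x) = gf" by (simp add: gf_def fun_eq_iff)
  ultimately show "(gf has_field_derivative gd z) (at z)" by (simp add: gd_def)
qed



definition pf :: "complex \<Rightarrow> complex" where "pf z = exp (gf z)"

lemma fd_bound:
  assumes "norm w \<le> \<rho>" "\<rho> < 1"
  shows "norm (fd k w) \<le> aa k / (1-\<rho>)"
proof -
  have r0: "0 \<le> \<rho>" using assms norm_ge_zero order_trans by blast
  have "norm (fd k w) = aa k * (real (nn k) * norm w ^ (nn k - 1))"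
    using aa_pos[of k] by (simp add: fd_def norm_mult norm_power)
  also have "\<dots> \<le> aa k * (real (nn k) * \<rho> ^ (nn k - 1))"
    using assms aa_pos[of k] by (intro mult_left_mono power_mono) auto
  also have "\<dots> \<le> aa k * (1/(1-\<rho>))"
    using pow_bound[OF r0 assms(2)] aa_pos[of k] by (intro mult_left_mono) auto
  finally show ?thesis by simp
qed

lemma fd_summable: assumes "norm w < 1" shows "summable (\<lambda>k. fd k w)"
proof (rule summable_norm_cancel, rule summable_comparison_test)
  show "\<exists>N. \<forall>n\<ge>N. norm (norm (fd n w)) \<le> aa n / (1 - norm w)"
    using fd_bound[of w "norm w"] assms by auto
  show "summable (\<lambda>k. aa k / (1 - norm w))"
    using aa_sums by (intro summable_divide) (auto simp: sums_iff)
qed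

lemma gf_norm: assumes "norm z < 1" shows "norm (gf z) \<le> 1"
proof -
  have "norm (gf z) \<le> (\<Sum>k. aa k)"
    unfolding gf_def
  proof (rule norm_suminf_le)
    show "norm (ft k z) \<le> aa k" for k
    proof -
      have "norm (ft k z) = aa k * norm z ^ nn k" using aa_pos[of k] by (simp add: ft_def norm_mult norm_power)
      also have "\<dots> \<le> aa k * 1" using assms aa_pos[of k] by (intro mult_left_mono power_le_one) auto
      finally show ?thesis by simp
    qed
    show "summable aa" using aa_sums by (auto simp: sums_iff)
  qed
  thus ?thesis using aa_sums by (simp add: sums_iff)
qed

lemma pf_deriv: assumes "norm z < 1" shows "(pf has_field_derivative pf z * gd z) (at z)"
  unfolding pf_def[abs_def]
  using gf_deriv(2)[OF assms] by (auto intro!: derivative_eq_intros)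

lemma pf_holo: "pf holomorphic_on ball 0 1"
proof (subst holomorphic_on_open)
  show "open (ball (0::complex) 1)" by simp
  show "\<forall>x\<in>ball 0 1. \<exists>f'. (pf has_field_derivative f') (at x)"
  proof
    fix x :: complex assume "x \<in> ball 0 1"
    hence "norm x < 1" by simp
    from pf_deriv[OF this] show "\<exists>f'. (pf has_field_derivative f') (at x)" by (rule exI)
  qed
qed

lemma pf_in: "pf \<in> carath_P"
  unfolding carath_P_def
proof (intro CollectI conjI ballI pf_holo)
  fix z :: complex assume "z \<in> ball 0 1"
  hence "norm z < 1" by auto
  hence "\<bar>Im (gf z)\<bar> \<le> 1" using gf_norm abs_Im_le_cmod order_trans by blast
  moreover have "1 < pi/2" using pi_gt3 by linarith
  ultimately have "cos (Im (gf z)) > 0" by (intro cos_gt_zero_pi) auto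
  thus "Re (pf z) > 0" by (simp add: pf_def Re_exp)
qed

lemma pf_deriv_eq: assumes "norm z < 1" shows "deriv pf z = pf z * gd z"
  using pf_deriv[OF assms] by (rule DERIV_imp_deriv)

lemma I_lower:
  assumes r: "0 < r" "r < 1" and L: "\<And>w. norm w = r \<Longrightarrow> L \<le> (cmod (w * gd w))^2"
  shows "2*pi*L \<le> I_int pf r"
proof -
  define h where "h w = (cmod (w * deriv pf w / pf w))^2" for w
  have hc: "continuous_on (ball 0 1) h"
  proof -
    have "continuous_on (ball 0 1) (deriv pf)"
      using holomorphic_deriv[OF pf_holo] holomorphic_on_imp_continuous_on by auto
    moreover have "continuous_on (ball 0 1) pf" using pf_holo holomorphic_on_imp_continuous_on by auto
    moreover have "\<forall>w\<in>ball 0 1. pf w \<noteq> 0" by (simp add: pf_def)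
    ultimately show ?thesis unfolding h_def by (auto intro!: continuous_intros)
  qed
  define z where "z \<theta> = complex_of_real r * exp (\<i> * complex_of_real \<theta>)" for \<theta>
  have nz: "norm (z \<theta>) = r" for \<theta> using r by (simp add: z_def norm_mult)
  have zc: "continuous_on {0..2*pi} z" unfolding z_def by (auto intro!: continuous_intros)
  have "continuous_on {0..2*pi} (\<lambda>\<theta>. h (z \<theta>))"
    by (rule continuous_on_compose2[OF hc zc]) (use nz r in auto)
  hence int: "(\<lambda>\<theta>. h (z \<theta>)) integrable_on {0..2*pi}" by (rule integrable_continuous_interval)
  have I: "I_int pf r = integral {0..2*pi} (\<lambda>\<theta>. h (z \<theta>))"
    by (simp add: I_int_def h_def z_def Let_def)
  have le: "L \<le> h (z \<theta>)" for \<theta>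
  proof -
    have "norm (z \<theta>) < 1" using nz r by auto
    hence "h (z \<theta>) = (cmod (z \<theta> * gd (z \<theta>)))^2"
      by (simp add: h_def pf_deriv_eq pf_def)
    thus ?thesis using L nz by auto
  qed
  have "integral {0..2*pi} (\<lambda>\<theta>. L) \<le> integral {0..2*pi} (\<lambda>\<theta>. h (z \<theta>))"
    by (rule integral_le[OF _ int]) (use le in auto)
  thus ?thesis using I pi_gt_zero by (simp add: mult_ac)
qed



lemma nn_mono: "k \<le> j \<Longrightarrow> nn k \<le> nn j"
  unfolding nn_def by (intro power_increasing) (auto intro: power_mono)

lemma nn_a: "real (nn J) * 2^(J+4) \<le> real (nn (Suc J))"
proof -
  have "(2::nat)^(4*J^2) * 2^(J+4) = 2^(4*J^2 + (J+4))" by (simp add: power_add)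
  also have "\<dots> \<le> 2^(4*(Suc J)^2)" by (intro power_increasing) (auto simp: power2_eq_square)
  finally have "nn J * 2^(J+4) \<le> nn (Suc J)" by (simp add: nn_def)
  hence "real (nn J * 2^(J+4)) \<le> real (nn (Suc J))" by linarith
  thus ?thesis by simp
qed

lemma nn_b: "256 * real (nn (Suc J)) * 2^(J+2) \<le> real (nn (Suc (Suc J)))"
proof -
  have "(2::nat)^8 * 2^(4*(Suc J)^2) * 2^(J+2) = 2^(8 + 4*(Suc J)^2 + (J+2))" by (simp add: power_add)
  also have "\<dots> \<le> 2^(4*(Suc (Suc J))^2)" by (intro power_increasing) (auto simp: power2_eq_square)
  finally have "256 * nn (Suc J) * 2^(J+2) \<le> nn (Suc (Suc J))" by (simp add: nn_def)
  hence "real (256 * nn (Suc J) * 2^(J+2)) \<le> real (nn (Suc (Suc J)))" by linarith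
  thus ?thesis by simp
qed

lemma exp_neg_bound: fixes y :: real assumes "y > 0" shows "exp (-y) \<le> 4 / y^2"
proof -
  have "y/2 \<le> 1 + y/2" by simp
  also have "\<dots> \<le> exp (y/2)" by (rule exp_ge_add_one_self)
  finally have "(y/2)^2 \<le> exp (y/2)^2" using assms by (intro power_mono) auto
  also have "\<dots> = exp y" by (simp add: power2_eq_square exp_add[symmetric])
  finally have "y^2 \<le> 4 * exp y" by (simp add: power_divide)
  thus ?thesis using assms by (simp add: exp_minus field_simps)
qed

lemma tail_bound:
  assumes N: "N \<ge> 1" and r: "r = 1 - 1/(2*N)" and m: "m \<ge> 1"
  shows "real m * r^(m-1) \<le> 32 * N^2 / real m"
proof -
  have "1/(2*N) \<le> 1/2" "1/(2*N) > 0" using N by (auto simp: field_simps)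
  hence r0: "1/2 \<le> r" "r < 1" using r by auto
  have "r \<le> exp (-(1/(2*N)))" using exp_ge_add_one_self[of "-(1/(2*N))"] r by simp
  hence "r^m \<le> exp (-(1/(2*N)))^m" using r0 by (intro power_mono) auto
  also have "\<dots> = exp (-(real m/(2*N)))" by (simp add: exp_of_nat_mult[symmetric])
  also have "\<dots> \<le> 4 / (real m/(2*N))^2" using N m by (intro exp_neg_bound) auto
  also have "\<dots> = 16 * N^2 / (real m)^2" by (simp add: power_divide field_simps power2_eq_square)
  finally have rm: "r^m \<le> 16 * N^2 / (real m)^2" .
  have "r^(m-1) \<le> 2 * r^m"
  proof -
    have "r^m = r * r^(m-1)" using m by (metis Suc_diff_1 less_le_trans power_Suc zero_less_one)
    thus ?thesis using r0 by (simp add: mult_right_mono[of "1/2" r "r^(m-1)"])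
  qed
  hence "real m * r^(m-1) \<le> real m * (2 * (16 * N^2 / (real m)^2))"
    using rm by (intro mult_left_mono) auto
  also have "\<dots> = 32 * N^2 / real m" using m by (simp add: power2_eq_square field_simps)
  finally show ?thesis .
qed



lemma core:
  fixes J :: nat
  defines "K \<equiv> Suc J"
  defines "N \<equiv> real (nn K)"
  assumes r: "r = 1 - 1/(2*N)" and w: "norm w = r"
  shows "aa K * N / 8 \<le> norm (gd w)"
proof -
  have N1: "N \<ge> 1" using nn_pos[of K] by (simp add: N_def)
  have "1/(2*N) \<le> 1/2" "1/(2*N) > 0" using N1 by (auto simp: field_simps)
  hence r0: "1/2 \<le> r" "r < 1" using r by auto
  have w1: "norm w < 1" using w r0 by simp
  define M where "M = real (nn J) + 32 * N^2 / real (nn (Suc K))"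
  define G where "G k = (if k = K then 0 else fd k w)" for k
  have Gb: "norm (G k) \<le> aa k * M" for k
  proof -
    have nf: "norm (fd k w) = aa k * (real (nn k) * r ^ (nn k - 1))"
      using aa_pos[of k] w by (simp add: fd_def norm_mult norm_power)
    have Mpos: "0 \<le> 32 * N^2 / real (nn (Suc K))" by simp
    consider "k = K" | "k < K" | "k > K" by linarith
    thus ?thesis
    proof cases
      case 1 thus ?thesis using aa_pos[of k] by (simp add: G_def M_def)
    next
      case 2
      have "real (nn k) * r ^ (nn k - 1) \<le> real (nn k) * 1"
        using r0 by (intro mult_left_mono power_le_one) auto
      also have "\<dots> \<le> real (nn J)" using 2 nn_mono[of k J] by (simp add: K_def)
      also have "\<dots> \<le> M" using Mpos by (simp add: M_def)
      finally show ?thesis using 2 nf aa_pos[of k] by (simp add: G_def mult_left_mono)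
    next
      case 3
      have "real (nn k) * r ^ (nn k - 1) \<le> 32 * N^2 / real (nn k)"
        by (rule tail_bound[OF N1 r nn_pos])
      also have "\<dots> \<le> 32 * N^2 / real (nn (Suc K))"
        using 3 nn_mono[of "Suc K" k] nn_pos[of "Suc K"]
        by (intro divide_left_mono) auto
      also have "\<dots> \<le> M" by (simp add: M_def)
      finally show ?thesis using 3 nf aa_pos[of k] by (simp add: G_def mult_left_mono)
    qed
  qed
  have sG: "summable G"
  proof -
    have e: "G = (\<lambda>k. fd k w - (if k = K then fd k w else 0))" by (auto simp: G_def fun_eq_iff)
    have "summable (\<lambda>k. fd k w)" by (rule fd_summable[OF w1])
    moreover have "summable (\<lambda>k. (if k = K then fd k w else 0))" by (rule sums_summable[OF sums_single])
    ultimately show ?thesis unfolding e by (rule summable_diff)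
  qed
  have gdeq: "gd w = fd K w + suminf G"
  proof -
    have "(\<lambda>k. G k + (if k = K then fd k w else 0)) sums (suminf G + fd K w)"
      using sums_add[OF summable_sums[OF sG] sums_single] .
    moreover have "(\<lambda>k. G k + (if k = K then fd k w else 0)) = (\<lambda>k. fd k w)" by (auto simp: G_def fun_eq_iff)
    ultimately have "(\<lambda>k. fd k w) sums (suminf G + fd K w)" by simp
    hence "gd w = suminf G + fd K w" unfolding gd_def by (rule sums_unique[symmetric])
    thus ?thesis by (simp add: add.commute)
  qed
  have nG: "norm (suminf G) \<le> M"
  proof -
    have sa: "summable aa" using aa_sums by (rule sums_summable)
    have "norm (suminf G) \<le> (\<Sum>k. aa k * M)"
      by (rule norm_suminf_le[OF Gb summable_mult2[OF sa]])
    also have "\<dots> = suminf aa * M" by (rule suminf_mult2[OF sa, symmetric])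
    also have "suminf aa = 1" using aa_sums by (rule sums_unique[symmetric])
    finally show ?thesis by simp
  qed
  have main: "aa K * N / 2 \<le> norm (fd K w)"
  proof -
    have "1 + real (nn K - 1) * (-(1/(2*N))) \<le> (1 + (-(1/(2*N))))^(nn K - 1)"
      using N1 by (intro Bernoulli_inequality) (auto simp: field_simps)
    moreover have "real (nn K - 1) = N - 1" using nn_pos[of K] by (simp add: N_def of_nat_diff)
    ultimately have b: "1 + (N - 1) * (-(1/(2*N))) \<le> r^(nn K - 1)" using r by simp
    have "1/2 \<le> 1 + (N - 1) * (-(1/(2*N)))" using N1 by (simp add: field_simps)
    hence "1/2 \<le> r^(nn K - 1)" using b by linarith
    hence "aa K * N * (1/2) \<le> aa K * N * r^(nn K - 1)"
      using aa_pos[of K] N1 by (intro mult_left_mono) auto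
    moreover have "norm (fd K w) = aa K * N * r^(nn K - 1)"
      using aa_pos[of K] w by (simp add: fd_def norm_mult norm_power N_def)
    ultimately show ?thesis by simp
  qed
  have aK: "aa K = 1 / 2^(J+2)" by (simp add: aa_def K_def power_divide)
  have M1: "real (nn J) \<le> aa K * N / 4"
  proof -
    have "aa K * N / 4 = N / 2^(J+4)" by (simp add: aK power_add)
    moreover have "real (nn J) \<le> N / 2^(J+4)"
      using nn_a[of J] by (simp add: pos_le_divide_eq N_def K_def)
    ultimately show ?thesis by simp
  qed
  have M2: "32 * N^2 / real (nn (Suc K)) \<le> aa K * N / 8"
  proof -
    have p: "real (nn (Suc K)) > 0" using nn_pos[of "Suc K"] by simp
    have "256 * N * 2^(J+2) \<le> real (nn (Suc K))" using nn_b[of J] by (simp add: N_def K_def)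
    hence "N * (256 * N * 2^(J+2)) \<le> N * real (nn (Suc K))"
      using N1 by (intro mult_left_mono) auto
    hence "32 * N^2 * (8 * 2^(J+2)) \<le> N * real (nn (Suc K))"
      by (simp add: power2_eq_square mult_ac)
    hence "32 * N^2 \<le> N * real (nn (Suc K)) / (8 * 2^(J+2))"
      by (simp add: pos_le_divide_eq)
    hence "32 * N^2 / real (nn (Suc K)) \<le> N / (8 * 2^(J+2))"
      using p by (simp add: divide_le_eq mult.commute)
    moreover have "aa K * N / 8 = N / (8 * 2^(J+2))" by (simp add: aK)
    ultimately show ?thesis by simp
  qed
  have "norm (gd w) \<ge> norm (fd K w) - norm (suminf G)"
    unfolding gdeq by (rule norm_diff_ineq)
  thus ?thesis using main nG M1 M2 by (simp add: M_def)
qed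



definition rs :: "nat \<Rightarrow> real" where "rs J = 1 - 1/(2*real (nn (Suc J)))"

lemma rs_bounds: "1/2 \<le> rs J" "rs J < 1"
proof -
  have N1: "real (nn (Suc J)) \<ge> 1" using nn_pos[of "Suc J"] by simp
  have "1/(2*real (nn (Suc J))) \<le> 1/2" "1/(2*real (nn (Suc J))) > 0" using N1 by (auto simp: field_simps)
  thus "1/2 \<le> rs J" "rs J < 1" by (auto simp: rs_def)
qed

lemma lowerJ: "2*pi*(aa (Suc J) * real (nn (Suc J)) / 16)^2 \<le> I_int pf (rs J)"
proof (rule I_lower)
  show "0 < rs J" "rs J < 1" using rs_bounds[of J] by auto
  fix w :: complex assume w: "norm w = rs J"
  have c: "aa (Suc J) * real (nn (Suc J)) / 8 \<le> norm (gd w)"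
    by (rule core[OF _ w]) (simp add: rs_def)
  have "aa (Suc J) * real (nn (Suc J)) / 16 = (1/2) * (aa (Suc J) * real (nn (Suc J)) / 8)" by simp
  also have "\<dots> \<le> rs J * norm (gd w)"
    using rs_bounds[of J] c aa_pos[of "Suc J"] by (intro mult_mono) auto
  also have "\<dots> = cmod (w * gd w)" using w by (simp add: norm_mult)
  finally have "aa (Suc J) * real (nn (Suc J)) / 16 \<le> cmod (w * gd w)" .
  thus "(aa (Suc J) * real (nn (Suc J)) / 16)^2 \<le> (cmod (w * gd w))^2"
    using aa_pos[of "Suc J"] by (intro power_mono) auto
qed

lemma nn_ge: "real (Suc J) \<le> real (nn (Suc J))"
proof -
  have "Suc J < 2^(Suc J)" by (rule less_exp)
  also have "(2::nat)^(Suc J) \<le> 2^(4*(Suc J)^2)" by (rule power_increasing) (auto simp: power2_eq_square)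
  also have "\<dots> = nn (Suc J)" by (simp only: nn_def)
  finally have "Suc J \<le> nn (Suc J)" by simp
  thus ?thesis by (simp only: of_nat_le_iff)
qed

lemma rs_lim: "filterlim rs (at_left 1) sequentially"
proof (rule tendsto_imp_filterlim_at_left)
  have f1: "filterlim (\<lambda>J. real (nn (Suc J))) at_top sequentially"
  proof (rule filterlim_at_top_mono[OF _ always_eventually])
    show "filterlim (\<lambda>J. real (Suc J)) at_top sequentially"
      by (rule filterlim_compose[OF filterlim_real_sequentially filterlim_Suc])
    show "\<forall>J. real (Suc J) \<le> real (nn (Suc J))" using nn_ge by blast
  qed
  have f2: "filterlim (\<lambda>J. 2 * real (nn (Suc J))) at_top sequentially"
    by (rule filterlim_tendsto_pos_mult_at_top[OF tendsto_const _ f1]) simp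
  have "((\<lambda>J. inverse (2 * real (nn (Suc J)))) \<longlongrightarrow> 0) sequentially"
    by (rule tendsto_inverse_0_at_top[OF f2])
  hence "((\<lambda>J. 1 - inverse (2 * real (nn (Suc J)))) \<longlongrightarrow> 1 - 0) sequentially"
    by (intro tendsto_diff tendsto_const)
  moreover have "rs = (\<lambda>J. 1 - inverse (2 * real (nn (Suc J))))"
    by (rule ext) (simp only: rs_def divide_inverse mult_1_left)
  ultimately show "(rs \<longlongrightarrow> 1) sequentially" by simp
  show "\<forall>\<^sub>F J in sequentially. rs J < 1" by (intro always_eventually allI rs_bounds(2))
qed

lemma t2: "1 - rs J = 1/(2*real (nn (Suc J)))" unfolding rs_def by simp
lemma t3: "(1/(x::real)) powr (- b) = x powr b" unfolding inverse_eq_divide[symmetric] by (simp only: inverse_powr powr_minus inverse_inverse_eq)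

theorem theorem1p2:
  shows "\<exists>p\<in>carath_P. \<forall>\<beta>::real. \<beta> < 2 \<longrightarrow>
           \<not> (\<exists>C::real. \<forall>\<^sub>F r in at_left 1. I_int p r \<le> C * (1 - r) powr (- \<beta>))"
proof (intro bexI[OF _ pf_in] allI impI notI)
  fix \<beta> :: real assume b: "\<beta> < 2"
  assume "\<exists>C::real. \<forall>\<^sub>F r in at_left 1. I_int pf r \<le> C * (1 - r) powr (- \<beta>)"
  then obtain C where ev: "\<forall>\<^sub>F r in at_left 1. I_int pf r \<le> C * (1 - r) powr (- \<beta>)" by blast
  have ev2: "\<forall>\<^sub>F J in sequentially. I_int pf (rs J) \<le> C * (1 - rs J) powr (- \<beta>)"
    using eventually_compose_filterlim[OF ev rs_lim] .
  define \<epsilon> where "\<epsilon> = 2 - \<beta>"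
  have e: "\<epsilon> > 0" using b by (simp add: \<epsilon>_def)
  define A where "A = \<bar>ln \<bar>C\<bar>\<bar> + 2*ln 2 + 2*ln 16 + \<bar>ln (2*pi)\<bar> + 4*ln 2"
  define T where "T = (A + 2*ln 2) / (4*\<epsilon>*ln 2)"
  have ev3: "\<forall>\<^sub>F J in sequentially. T < real J + 1"
  proof -
    have "\<forall>\<^sub>F J in sequentially. nat \<lceil>T\<rceil> \<le> J" by (rule eventually_ge_at_top)
    thus ?thesis by eventually_elim linarith
  qed
  obtain J where J1: "I_int pf (rs J) \<le> C * (1 - rs J) powr (- \<beta>)" and J2: "T < real J + 1"
    using eventually_happens'[OF sequentially_bot eventually_conj[OF ev2 ev3]] by blast
  define N where "N = real (nn (Suc J))"
  have N1: "N \<ge> 1" using nn_pos[of "Suc J"] by (simp add: N_def)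
  have N2: "N = (2::real)^(4*(Suc J)^2)" by (simp only: N_def nn_def of_nat_power of_nat_numeral)
  have "ln N = real (4*(Suc J)^2) * ln 2" unfolding N2 by (rule ln_realpow)
  moreover have "real (4*(Suc J)^2) = 4*(real J+1)^2" by simp
  ultimately have lnN: "ln N = 4*(real J+1)^2 * ln 2" by simp
  have aK: "aa (Suc J) = 1 / 2^(J+2)" by (simp add: aa_def power_divide)
  have l2: "ln ((2::real)^(J+2)) = real (J+2) * ln 2" by (rule ln_realpow)
  have lnaK: "ln (aa (Suc J)) = - (real J + 2) * ln 2"
    unfolding aK by (subst ln_div) (use l2 in \<open>auto simp: algebra_simps\<close>)
  have "1 - rs J = 1/(2*N)" unfolding N_def by (rule t2)
  moreover have "(1/(2*N)) powr (- \<beta>) = (2*N) powr \<beta>" by (rule t3)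
  ultimately have rhs: "C * (1 - rs J) powr (- \<beta>) = C * (2*N) powr \<beta>" by simp
  have L: "2*pi*(aa (Suc J) * N / 16)^2 \<le> C * (2*N) powr \<beta>"
    using lowerJ[of J, folded N_def] J1 rhs by simp
  have Lpos: "0 < 2*pi*(aa (Suc J) * N / 16)^2" using aa_pos[of "Suc J"] N1 by simp
  hence Cpos: "C > 0" using L N1 by (smt (verit) powr_ge_zero mult_nonpos_nonneg)
  have "ln (2*pi*(aa (Suc J) * N / 16)^2) \<le> ln (C * (2*N) powr \<beta>)"
    using L Lpos by simp
  moreover have "ln (2*pi*(aa (Suc J) * N / 16)^2) = ln (2*pi) + 2*ln (aa (Suc J)) + 2*ln N - 2*ln 16"
  proof -
    have ap: "aa (Suc J) > 0" by (rule aa_pos)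
    have Np: "N > 0" using N1 by simp
    have Xp: "aa (Suc J) * N / 16 > 0" using ap Np by simp
    have x1: "ln (aa (Suc J) * N / 16) = ln (aa (Suc J) * N) - ln 16"
      using ap Np by (subst ln_div) simp
    have x2: "ln (aa (Suc J) * N) = ln (aa (Suc J)) + ln N" using ap Np by (subst ln_mult) simp
    have x3: "ln ((aa (Suc J) * N / 16)^2) = real 2 * ln (aa (Suc J) * N / 16)" by (rule ln_realpow)
    have x4: "ln (2*pi*(aa (Suc J) * N / 16)^2) = ln (2*pi) + ln ((aa (Suc J) * N / 16)^2)"
      using ap Np by (subst ln_mult) simp
    show ?thesis unfolding x4 x3 x1 x2 by simp
  qed
  moreover have "ln (C * (2*N) powr \<beta>) = ln C + \<beta> * (ln 2 + ln N)"
    using Cpos N1 by (simp add: ln_mult ln_powr)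
  ultimately have ineq: "\<epsilon> * ln N \<le> ln C - ln (2*pi) + 2*ln 16 + \<beta> * ln 2 + 2*(real J + 2)*ln 2"
    unfolding lnaK \<epsilon>_def by (simp add: algebra_simps)
  have f1: "\<beta> * ln 2 \<le> 2 * ln 2" using b by (intro mult_right_mono) auto
  have f2: "ln C \<le> \<bar>ln \<bar>C\<bar>\<bar>" using Cpos by simp
  have f3: "- ln (2*pi) \<le> \<bar>ln (2*pi)\<bar>" by simp
  have "\<epsilon> * ln N \<le> A + 2*real J*ln 2" unfolding A_def using ineq f1 f2 f3 by argo
  also have "\<dots> \<le> (A + 2*ln 2) * (real J + 1)"
  proof -
    have A0: "A \<ge> 0" unfolding A_def by (simp add: add_nonneg_nonneg)
    have "A \<le> A * (real J + 1)" using A0 by (simp add: algebra_simps)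
    thus ?thesis by (simp add: algebra_simps)
  qed
  also have "\<dots> < (4*\<epsilon>*ln 2 * (real J + 1)) * (real J + 1)"
  proof (rule mult_strict_right_mono)
    have "A + 2*ln 2 = T * (4*\<epsilon>*ln 2)" using e by (simp add: T_def)
    also have "\<dots> < (real J + 1) * (4*\<epsilon>*ln 2)" using J2 e by (intro mult_strict_right_mono) auto
    finally show "A + 2*ln 2 < 4*\<epsilon>*ln 2 * (real J + 1)" by (simp add: mult_ac)
  qed auto
  also have "\<dots> = \<epsilon> * ln N" by (simp add: lnN power2_eq_square mult_ac)
  finally show False by simp
qed


end
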